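(* Let $\alpha>0$, $p=\frac{\alpha}{1+\alpha}$, and $q\in(p,1)$. Let $S_t=\sum_{i=1}^t\zeta_i$ where $\zeta_1,\zeta_2,\dots$ are i.i.d. with $\mathbb P(\zeta_i=1)=1-q$ and $\mathbb P(\zeta_i=-1/\alpha)=q$. Then $$\mathbb P\Big(\max_{t\ge1}S_t\le 0\Big)\ \le\ q\min\Big\{\frac{2(q-p)}{p(1-q)},\,1\Big\}.$$ *)

theory Defs
  imports "HOL-Probability.Probability"
begin

end

theory Submission
  imports Defs
begin


lemma key_s:
  fixes s :: real assumes "0 \<le> s"
  shows "(1 + s/2) * (1 - exp(-s)) \<le> s"
proof (cases "s \<ge> 2")
  case True
  have "(1 + s/2) * (1 - exp(-s)) \<le> (1 + s/2) * 1"
    using True by (intro mult_left_mono) auto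
  also have "\<dots> \<le> s" using True by simp
  finally show ?thesis .
next
  case False
  let ?phi = "\<lambda>s::real. (1 + s/2) * exp(-s) - (1 - s/2)"
  have "?phi 0 \<le> ?phi s"
  proof (rule DERIV_nonneg_imp_increasing_open[OF assms])
    fix y :: real assume y: "0 < y" "y < s"
    have "DERIV ?phi y :> ((1/2) * exp(-y) + (1 + y/2) * (exp(-y) * (-1)) - (- 1/2))"
      by (auto intro!: derivative_eq_intros)
    moreover have "(1/2) * exp(-y) + (1 + y/2) * (exp(-y) * (-1)) - (- 1/2) \<ge> 0"
    proof -
      have "1 + y \<le> exp y" by (rule exp_ge_add_one_self)
      then have "(1 + y) * exp(-y) \<le> exp y * exp (-y)" by (intro mult_right_mono) auto
      then have "(1 + y) * exp(-y) \<le> 1" by (simp add: exp_minus_inverse)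
      then show ?thesis by (simp add: algebra_simps)
    qed
    ultimately show "\<exists>d. DERIV ?phi y :> d \<and> 0 \<le> d" by blast
  next
    show "continuous_on {0..s} ?phi" by (intro continuous_intros) auto
  qed
  then have "1 - s/2 \<le> (1 + s/2) * exp(-s)" by simp
  then show ?thesis by (simp add: algebra_simps add_divide_distrib diff_divide_distrib)
qed

lemma f_nonneg:
  fixes a q :: real
  assumes a: "a > 0" and q: "0 < q" "q < 1" and mu: "1 - q < q * a"
  defines "\<theta> \<equiv> 2 * (q * a - (1 - q)) / ((1 - q) * (1 + a))"
  shows "(1 - q) * exp \<theta> + q * exp (- a * \<theta>) \<ge> 1"
proof -
  have th: "\<theta> > 0" using assms unfolding \<theta>_def by (auto intro!: divide_pos_pos)
  have nz: "(1 - q) * (1 + a) \<noteq> 0" using q a by simp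
  have tt: "\<theta> * ((1 - q) * (1 + a)) = 2 * (q * a - (1 - q))"
    unfolding \<theta>_def using nz by simp
  have qa: "q * a = (1 - q) * (1 + (1 + a) * \<theta> / 2)"
  proof -
    have "(1 - q) * (1 + (1 + a) * \<theta> / 2) = (1 - q) + \<theta> * ((1 - q) * (1 + a)) / 2"
      by (simp add: algebra_simps)
    also have "\<dots> = q * a" unfolding tt by (simp add: field_simps)
    finally show ?thesis by simp
  qed
  define s where "s = a * \<theta>"
  have s0: "s \<ge> 0" using th a by (simp add: s_def)
  have e1: "a * (\<theta> + \<theta>^2/2) \<le> a * (exp \<theta> - 1)"
    using exp_lower_Taylor_quadratic[of \<theta>] th a by (intro mult_left_mono) auto
  have e2: "(1 + (1 + a) * \<theta> / 2) * (1 - exp (-s)) \<le> (1 + \<theta>/2) * (1 + s/2) * (1 - exp (-s))"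
  proof (rule mult_right_mono)
    show "1 + (1 + a) * \<theta> / 2 \<le> (1 + \<theta>/2) * (1 + s/2)"
      using th a s0 by (simp add: s_def algebra_simps)
    show "0 \<le> 1 - exp (-s)" using s0 by simp
  qed
  have e3: "(1 + \<theta>/2) * ((1 + s/2) * (1 - exp (-s))) \<le> (1 + \<theta>/2) * s"
    using key_s[OF s0] th by (intro mult_left_mono) auto
  have main: "(1 + (1 + a) * \<theta> / 2) * (1 - exp (-s)) \<le> a * (exp \<theta> - 1)"
  proof -
    have "(1 + \<theta>/2) * s = a * (\<theta> + \<theta>^2/2)" by (simp add: s_def power2_eq_square algebra_simps)
    then show ?thesis using e1 e2 e3 by (simp add: mult.assoc)
  qed
  have "q * a * (1 - exp (-s)) \<le> (1 - q) * (a * (exp \<theta> - 1))"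
    unfolding qa using main q by (simp add: mult.assoc mult_left_mono)
  then have "a * (q * (1 - exp (-s))) \<le> a * ((1 - q) * (exp \<theta> - 1))"
    by (simp add: algebra_simps)
  then have "q * (1 - exp (-s)) \<le> (1 - q) * (exp \<theta> - 1)" using a by simp
  then show ?thesis by (simp add: s_def algebra_simps)
qed



fun V :: "real \<Rightarrow> real \<Rightarrow> nat \<Rightarrow> real \<Rightarrow> real" where
  "V q a 0 x = 1"
| "V q a (Suc n) x = (1 - q) * (if x + 1 \<le> 0 then V q a n (x + 1) else 0)
      + q * (if x - a \<le> 0 then V q a n (x - a) else 0)"

fun R :: "real \<Rightarrow> real \<Rightarrow> real \<Rightarrow> nat \<Rightarrow> real \<Rightarrow> real" where
  "R q a t 0 x = exp (t * (x - 1))"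
| "R q a t (Suc n) x = (1 - q) * (if x + 1 \<le> 0 then R q a t n (x + 1) else 0)
      + q * (if x - a \<le> 0 then R q a t n (x - a) else 0)"

lemma V_R_bound:
  assumes q: "0 \<le> q" "q \<le> 1" and a: "a > 0" and t: "t \<ge> 0"
    and f: "(1 - q) * exp t + q * exp (- a * t) \<ge> 1"
  shows "x \<le> 0 \<Longrightarrow> V q a n x \<le> 1 - exp (t * (x - 1)) + R q a t n x"
proof (induction n arbitrary: x)
  case 0
  then show ?case by simp
next
  case (Suc n)
  have xa: "x - a \<le> 0" using Suc.prems a by simp
  have w: "(1 - q) * exp (t * (x + 1 - 1)) + q * exp (t * (x - a - 1)) \<ge> exp (t * (x - 1))"
  proof -
    have "exp (t * (x - 1)) * 1 \<le> exp (t * (x - 1)) * ((1 - q) * exp t + q * exp (- a * t))"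
      using f by (intro mult_left_mono) auto
    also have "\<dots> = (1 - q) * exp (t * (x + 1 - 1)) + q * exp (t * (x - a - 1))"
      by (simp add: algebra_simps flip: exp_add)
    finally show ?thesis by simp
  qed
  show ?case
  proof (cases "x + 1 \<le> 0")
    case True
    have "V q a (Suc n) x = (1 - q) * V q a n (x + 1) + q * V q a n (x - a)"
      using True xa by simp
    also have "\<dots> \<le> (1 - q) * (1 - exp (t * (x + 1 - 1)) + R q a t n (x + 1))
        + q * (1 - exp (t * (x - a - 1)) + R q a t n (x - a))"
      using Suc.IH[of "x+1"] Suc.IH[of "x - a"] True xa q
      by (intro add_mono mult_left_mono) auto
    also have "\<dots> \<le> 1 - exp (t * (x - 1)) + R q a t (Suc n) x"
      using True xa w by (simp add: algebra_simps)
    finally show ?thesis .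
  next
    case False
    have e: "exp (t * (x + 1 - 1)) \<le> 1" using Suc.prems t
      by (simp add: mult_nonneg_nonpos)
    have "V q a (Suc n) x = q * V q a n (x - a)"
      using False xa by simp
    also have "\<dots> \<le> q * (1 - exp (t * (x - a - 1)) + R q a t n (x - a))"
      using Suc.IH[of "x - a"] xa q by (intro mult_left_mono) auto
    also have "\<dots> \<le> 1 - exp (t * (x - 1)) + R q a t (Suc n) x"
    proof -
      have "(1 - q) * exp (t * (x + 1 - 1)) \<le> (1 - q)" using e q by (simp add: mult_left_le)
      then show ?thesis using False xa w by (simp add: algebra_simps)
    qed
    finally show ?thesis .
  qed
qed

lemma R_bound:
  assumes q: "0 \<le> q" "q \<le> 1" and a: "a > 0" and t: "0 \<le> t'" "t' \<le> t"
  shows "x \<le> 0 \<Longrightarrow> R q a t n x \<le> exp (- t) * exp (t' * x) * ((1 - q) * exp t' + q * exp (- t' * a)) ^ n"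
proof (induction n arbitrary: x)
  case 0
  have "t * x \<le> t' * x" using 0 t by (intro mult_right_mono_neg) auto
  then show ?case by (simp add: algebra_simps flip: exp_add)
next
  case (Suc n)
  let ?m = "(1 - q) * exp t' + q * exp (- t' * a)"
  have xa: "x - a \<le> 0" using Suc.prems a by simp
  have "R q a t (Suc n) x \<le> (1 - q) * (exp (- t) * exp (t' * (x + 1)) * ?m ^ n)
      + q * (exp (- t) * exp (t' * (x - a)) * ?m ^ n)"
  proof -
    have m0: "?m \<ge> 0" using q by simp
    have A: "(1 - q) * (if x + 1 \<le> 0 then R q a t n (x + 1) else 0) \<le> (1 - q) * (exp (- t) * exp (t' * (x + 1)) * ?m ^ n)"
      using Suc.IH[of "x+1"] q m0 by (intro mult_left_mono) auto
    have B: "q * (if x - a \<le> 0 then R q a t n (x - a) else 0) \<le> q * (exp (- t) * exp (t' * (x - a)) * ?m ^ n)"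
      using Suc.IH[of "x-a"] xa q by (intro mult_left_mono) auto
    show ?thesis using A B by simp
  qed
  also have "\<dots> = exp (- t) * exp (t' * x) * ?m ^ Suc n"
  proof -
    have "exp (t' * (x + 1)) = exp (t' * x) * exp t'" "exp (t' * (x - a)) = exp (t' * x) * exp (- t' * a)"
      by (simp_all add: algebra_simps flip: exp_add)
    then show ?thesis by (simp add: algebra_simps)
  qed
  finally show ?case .
qed



definition G :: "nat \<Rightarrow> nat \<Rightarrow> real \<Rightarrow> (nat \<Rightarrow> real) set" where
  "G n k x = {f. \<forall>j\<in>{1..n}. x + (\<Sum>i\<in>{k..<k+j}. f i) \<le> 0}"

lemma G_sets: "G n k x \<inter> space (PiM {k..} (\<lambda>_. borel)) \<in> sets (PiM {k..} (\<lambda>_. borel :: real measure))"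
proof -
  let ?N = "PiM {k..} (\<lambda>_. borel :: real measure)"
  have m: "\<And>j. (\<lambda>f. x + (\<Sum>i\<in>{k..<k+j}. f i)) \<in> borel_measurable ?N"
    by (intro borel_measurable_add borel_measurable_const borel_measurable_sum measurable_component_singleton) auto
  have "G n k x \<inter> space ?N = {f \<in> space ?N. \<forall>j\<in>{1..n}. x + (\<Sum>i\<in>{k..<k+j}. f i) \<le> 0}"
    by (auto simp: G_def)
  also have "\<dots> \<in> sets ?N"
    using m by measurable
  finally show ?thesis .
qed

lemma G_Suc: "f \<in> G (Suc n) k x \<longleftrightarrow> x + f k \<le> 0 \<and> f \<in> G n (Suc k) (x + f k)"
proof -
  have s: "\<And>j. (\<Sum>i\<in>{k..<k+Suc j}. f i) = f k + (\<Sum>i\<in>{Suc k..<Suc k+j}. f i)"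
    by (simp add: sum.atLeast_Suc_lessThan)
  show ?thesis
  proof
    assume h: "f \<in> G (Suc n) k x"
    have "x + f k \<le> 0" using h[unfolded G_def] s[of 0] by force
    moreover have "f \<in> G n (Suc k) (x + f k)"
      unfolding G_def
    proof safe
      fix j assume "j \<in> {1..n}"
      then have "Suc j \<in> {1..Suc n}" by auto
      then have "x + (\<Sum>i\<in>{k..<k+Suc j}. f i) \<le> 0" using h unfolding G_def by blast
      then show "x + f k + (\<Sum>i\<in>{Suc k..<Suc k+j}. f i) \<le> 0" unfolding s by simp
    qed
    ultimately show "x + f k \<le> 0 \<and> f \<in> G n (Suc k) (x + f k)" ..
  next
    assume h: "x + f k \<le> 0 \<and> f \<in> G n (Suc k) (x + f k)"
    show "f \<in> G (Suc n) k x"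
      unfolding G_def
    proof safe
      fix j assume j: "j \<in> {1..Suc n}"
      then obtain j' where j': "j = Suc j'" "j' \<le> n" by (cases j) auto
      show "x + (\<Sum>i\<in>{k..<k+j}. f i) \<le> 0"
      proof (cases "j' = 0")
        case True then show ?thesis using h j' by simp
      next
        case False
        then have "j' \<in> {1..n}" using j' by auto
        then show ?thesis using h j' s[of j'] unfolding G_def by (simp add: add.assoc)
      qed
    qed
  qed
qed

lemma G_0: "G 0 k x = UNIV" by (simp add: G_def)

context prob_space
begin

lemma E_restr:
  assumes "\<And>i. i \<ge> k \<Longrightarrow> \<zeta> i \<in> borel_measurable M"
  shows "{\<omega>\<in>space M. (\<lambda>i. \<zeta> i \<omega>) \<in> G n k x} =
    (\<lambda>\<omega>. restrict (\<lambda>i. \<zeta> i \<omega>) {k..}) -` (G n k x \<inter> space (PiM {k..} (\<lambda>_. borel :: real measure))) \<inter> space M"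
  by (auto simp: G_def space_PiM)

lemma E_sets:
  assumes "\<And>i. i \<ge> k \<Longrightarrow> \<zeta> i \<in> borel_measurable M"
  shows "{\<omega>\<in>space M. (\<lambda>i. \<zeta> i \<omega>) \<in> G n k x} \<in> events"
proof -
  have "(\<lambda>\<omega>. restrict (\<lambda>i. \<zeta> i \<omega>) {k..}) \<in> measurable M (PiM {k..} (\<lambda>_. borel :: real measure))"
    using assms by (intro measurable_restrict) auto
  then have "(\<lambda>\<omega>. restrict (\<lambda>i. \<zeta> i \<omega>) {k..}) -` (G n k x \<inter> space (PiM {k..} (\<lambda>_. borel :: real measure))) \<inter> space M \<in> events"
    by (rule measurable_sets[OF _ G_sets])
  then show ?thesis by (subst E_restr[OF assms])
qed

lemma indep_step:
  fixes \<zeta> :: "nat \<Rightarrow> 'a \<Rightarrow> real"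
  assumes ind: "indep_vars (\<lambda>_. borel) \<zeta> {1..}" and k: "k \<ge> 1"
  shows "prob ({\<omega>\<in>space M. \<zeta> k \<omega> = c} \<inter> {\<omega>\<in>space M. (\<lambda>i. \<zeta> i \<omega>) \<in> G n (Suc k) y}) =
    prob {\<omega>\<in>space M. \<zeta> k \<omega> = c} * prob {\<omega>\<in>space M. (\<lambda>i. \<zeta> i \<omega>) \<in> G n (Suc k) y}"
proof -
  let ?A = "\<lambda>\<omega>. restrict (\<lambda>i. \<zeta> i \<omega>) {k}"
  let ?B = "\<lambda>\<omega>. restrict (\<lambda>i. \<zeta> i \<omega>) {Suc k..}"
  let ?NA = "PiM {k} (\<lambda>_. borel :: real measure)"
  let ?NB = "PiM {Suc k..} (\<lambda>_. borel :: real measure)"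
  have iv: "indep_var ?NA ?A ?NB ?B"
    by (rule indep_var_restrict[OF ind]) (use k in auto)
  have meas: "\<And>i. i \<ge> 1 \<Longrightarrow> \<zeta> i \<in> borel_measurable M"
    using ind unfolding indep_vars_def by auto
  have Xa: "{f \<in> space ?NA. f k = c} \<in> sets ?NA"
  proof -
    have "(\<lambda>f. f k) \<in> borel_measurable ?NA" by (rule measurable_component_singleton) auto
    then show ?thesis by measurable
  qed
  have "prob ((\<lambda>x. (?A x, ?B x)) -` ({f \<in> space ?NA. f k = c} \<times> (G n (Suc k) y \<inter> space ?NB)) \<inter> space M) =
      prob (?A -` {f \<in> space ?NA. f k = c} \<inter> space M) * prob (?B -` (G n (Suc k) y \<inter> space ?NB) \<inter> space M)"
    by (rule indep_varD[OF iv Xa G_sets])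
  moreover have "(\<lambda>x. (?A x, ?B x)) -` ({f \<in> space ?NA. f k = c} \<times> (G n (Suc k) y \<inter> space ?NB)) \<inter> space M
      = {\<omega>\<in>space M. \<zeta> k \<omega> = c} \<inter> {\<omega>\<in>space M. (\<lambda>i. \<zeta> i \<omega>) \<in> G n (Suc k) y}"
    by (auto simp: G_def space_PiM)
  moreover have "?A -` {f \<in> space ?NA. f k = c} \<inter> space M = {\<omega>\<in>space M. \<zeta> k \<omega> = c}"
    by (auto simp: space_PiM)
  moreover have "?B -` (G n (Suc k) y \<inter> space ?NB) \<inter> space M = {\<omega>\<in>space M. (\<lambda>i. \<zeta> i \<omega>) \<in> G n (Suc k) y}"
    by (auto simp: G_def space_PiM)
  ultimately show ?thesis by simp
qed

end


context prob_space
begin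

lemma prob_G:
  fixes \<zeta> :: "nat \<Rightarrow> 'a \<Rightarrow> real"
  assumes ind: "indep_vars (\<lambda>_. borel) \<zeta> {1..}" and a: "a > 0"
    and h1: "\<And>i. i \<ge> 1 \<Longrightarrow> prob {\<omega>\<in>space M. \<zeta> i \<omega> = 1} = 1 - q"
    and h2: "\<And>i. i \<ge> 1 \<Longrightarrow> prob {\<omega>\<in>space M. \<zeta> i \<omega> = - a} = q"
  shows "k \<ge> 1 \<Longrightarrow> prob {\<omega>\<in>space M. (\<lambda>i. \<zeta> i \<omega>) \<in> G n k x} = V q a n x"
proof (induction n arbitrary: k x)
  case 0
  then show ?case by (simp add: G_0 prob_space)
next
  case (Suc n)
  have meas: "\<And>i. i \<ge> 1 \<Longrightarrow> \<zeta> i \<in> borel_measurable M"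
    using ind unfolding indep_vars_def by auto
  have mk[measurable]: "\<zeta> k \<in> borel_measurable M" using meas Suc.prems by auto
  let ?E = "\<lambda>n k x. {\<omega>\<in>space M. (\<lambda>i. \<zeta> i \<omega>) \<in> G n k x}"
  define A1 where "A1 = {\<omega>\<in>space M. \<zeta> k \<omega> = 1}"
  define A2 where "A2 = {\<omega>\<in>space M. \<zeta> k \<omega> = - a}"
  have A1s: "A1 \<in> events" unfolding A1_def by measurable
  have A2s: "A2 \<in> events" unfolding A2_def by measurable
  have Es: "\<And>n k' x. k' \<ge> k \<Longrightarrow> ?E n k' x \<in> events"
    by (rule E_sets) (use meas Suc.prems in auto)
  have disj: "A1 \<inter> A2 = {}" using a unfolding A1_def A2_def by auto
  have pU: "prob (A1 \<union> A2) = 1"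
    using finite_measure_Union[OF A1s A2s disj] h1[OF Suc.prems] h2[OF Suc.prems]
    unfolding A1_def A2_def by simp
  have null: "prob (?E (Suc n) k x - (A1 \<union> A2)) = 0"
  proof -
    have "prob (?E (Suc n) k x - (A1 \<union> A2)) \<le> prob (space M - (A1 \<union> A2))"
      by (rule finite_measure_mono) (use A1s A2s in auto)
    also have "\<dots> = 0" using prob_compl[of "A1 \<union> A2"] A1s A2s pU by simp
    finally show ?thesis using measure_nonneg[of M] by (meson order_antisym)
  qed
  have split: "prob (?E (Suc n) k x) = prob (?E (Suc n) k x \<inter> A1) + prob (?E (Suc n) k x \<inter> A2)"
  proof -
    have "prob (?E (Suc n) k x) = prob (?E (Suc n) k x \<inter> (A1 \<union> A2)) + prob (?E (Suc n) k x - (A1 \<union> A2))"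
      using finite_measure_Diff'[of "?E (Suc n) k x" "A1 \<union> A2"] Es[of k "Suc n" x] A1s A2s by simp
    also have "prob (?E (Suc n) k x \<inter> (A1 \<union> A2)) = prob (?E (Suc n) k x \<inter> A1) + prob (?E (Suc n) k x \<inter> A2)"
      by (subst finite_measure_Union[symmetric]) (use Es A1s A2s disj in \<open>auto intro!: arg_cong[where f=prob]\<close>)
    finally show ?thesis using null by simp
  qed
  have k1: "Suc k \<ge> 1" by simp
  have P1: "prob (?E (Suc n) k x \<inter> A1) = (1 - q) * (if x + 1 \<le> 0 then V q a n (x + 1) else 0)"
  proof (cases "x + 1 \<le> 0")
    case True
    have "?E (Suc n) k x \<inter> A1 = A1 \<inter> ?E n (Suc k) (x + 1)"
      unfolding A1_def using True by (auto simp: G_Suc)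
    then have "prob (?E (Suc n) k x \<inter> A1) = prob A1 * prob (?E n (Suc k) (x + 1))"
      unfolding A1_def using indep_step[OF ind Suc.prems] by simp
    then show ?thesis using True Suc.IH[OF k1] h1[OF Suc.prems] unfolding A1_def by simp
  next
    case False
    have "?E (Suc n) k x \<inter> A1 = {}"
      unfolding A1_def using False by (auto simp: G_Suc)
    then show ?thesis using False by simp
  qed
  have P2: "prob (?E (Suc n) k x \<inter> A2) = q * (if x - a \<le> 0 then V q a n (x - a) else 0)"
  proof (cases "x - a \<le> 0")
    case True
    have "?E (Suc n) k x \<inter> A2 = A2 \<inter> ?E n (Suc k) (x - a)"
      unfolding A2_def using True by (auto simp: G_Suc)
    then have "prob (?E (Suc n) k x \<inter> A2) = prob A2 * prob (?E n (Suc k) (x - a))"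
      unfolding A2_def using indep_step[OF ind Suc.prems] by simp
    then show ?thesis using True Suc.IH[OF k1] h2[OF Suc.prems] unfolding A2_def by simp
  next
    case False
    have "?E (Suc n) k x \<inter> A2 = {}"
      unfolding A2_def using False by (auto simp: G_Suc)
    then show ?thesis using False by simp
  qed
  show ?case using split P1 P2 by simp
qed

end


theorem lemma3:
  fixes M :: "'a measure" and \<alpha> q :: real and \<zeta> :: "nat \<Rightarrow> 'a \<Rightarrow> real"
  assumes "prob_space M"
    and "\<alpha> > 0"
    and "\<alpha> / (1 + \<alpha>) < q" and "q < 1"
    and "prob_space.indep_vars M (\<lambda>_. borel) \<zeta> {1..}"
    and "\<And>i. i \<ge> 1 \<Longrightarrow> measure M {\<omega> \<in> space M. \<zeta> i \<omega> = 1} = 1 - q"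
    and "\<And>i. i \<ge> 1 \<Longrightarrow> measure M {\<omega> \<in> space M. \<zeta> i \<omega> = - 1 / \<alpha>} = q"
  shows "measure M {\<omega> \<in> space M. \<forall>t\<ge>1. (\<Sum>i=1..t. \<zeta> i \<omega>) \<le> 0}
           \<le> q * min (2 * (q - \<alpha> / (1 + \<alpha>)) / ((\<alpha> / (1 + \<alpha>)) * (1 - q))) 1"
proof -
  interpret prob_space M by fact
  define a where "a = 1 / \<alpha>"
  have a: "a > 0" using assms(2) by (simp add: a_def)
  have h2: "\<And>i. i \<ge> 1 \<Longrightarrow> prob {\<omega> \<in> space M. \<zeta> i \<omega> = - a} = q"
    using assms(7) by (simp add: a_def)
  have p0: "\<alpha> / (1 + \<alpha>) > 0" using assms(2) by simp
  have q0: "q > 0" using p0 assms(3) by linarith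
  have mu: "1 - q < q * a"
  proof -
    have "\<alpha> < q * (1 + \<alpha>)" using assms(3) assms(2) by (simp add: divide_less_eq)
    then have "\<alpha> * (1 - q) < q" by (simp add: algebra_simps)
    then show ?thesis unfolding a_def using assms(2) by (simp add: field_simps)
  qed
  define X where "X = 2 * (q * a - (1 - q)) / (1 - q)"
  have Xeq: "X = 2 * (q - \<alpha> / (1 + \<alpha>)) / ((\<alpha> / (1 + \<alpha>)) * (1 - q))"
  proof -
    have n1: "1 + \<alpha> \<noteq> 0" "\<alpha> \<noteq> 0" "\<alpha> + \<alpha> * \<alpha> \<noteq> 0" using assms(2) by (auto, metis add_pos_pos less_irrefl mult_pos_pos)
    have e: "(q - \<alpha> / (1 + \<alpha>)) / (\<alpha> / (1 + \<alpha>)) = q * a - (1 - q)"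
    proof -
      have "(q - \<alpha> / (1 + \<alpha>)) / (\<alpha> / (1 + \<alpha>)) = (q - \<alpha> / (1 + \<alpha>)) * ((1 + \<alpha>) / \<alpha>)"
        by simp
      also have "\<dots> = q * ((1 + \<alpha>) / \<alpha>) - 1" using n1 by (simp add: algebra_simps)
      also have "\<dots> = q * a - (1 - q)" unfolding a_def using n1 by (simp add: add_divide_distrib algebra_simps)
      finally show ?thesis .
    qed
    have "2 * (q - \<alpha> / (1 + \<alpha>)) / ((\<alpha> / (1 + \<alpha>)) * (1 - q))
        = 2 * ((q - \<alpha> / (1 + \<alpha>)) / (\<alpha> / (1 + \<alpha>))) / (1 - q)"
      by (simp add: field_simps)
    then show ?thesis unfolding X_def e by simp
  qed
  define \<theta> where "\<theta> = 2 * (q * a - (1 - q)) / ((1 - q) * (1 + a))"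
  have th0: "\<theta> > 0" unfolding \<theta>_def using mu assms(4) a by (auto intro!: divide_pos_pos)
  have thX: "\<theta> * (1 + a) = X" unfolding \<theta>_def X_def using a by simp
  have f: "(1 - q) * exp \<theta> + q * exp (- a * \<theta>) \<ge> 1"
    unfolding \<theta>_def by (rule f_nonneg[OF a q0 assms(4) mu])
  let ?m = "\<lambda>t. (1 - q) * exp t + q * exp (- t * a)"
  have "DERIV ?m 0 :> ((1 - q) * exp 0 + q * (exp (- 0 * a) * (- a)))"
    by (auto intro!: derivative_eq_intros)
  then have "DERIV ?m 0 :> ((1 - q) - q * a)" by simp
  then have "\<exists>d>0. \<forall>h>0. h < d \<longrightarrow> ?m 0 > ?m (0 + h)"
    by (rule DERIV_neg_dec_right) (use mu in simp)
  then obtain d where d: "d > 0" "\<And>h. h > 0 \<Longrightarrow> h < d \<Longrightarrow> ?m h < 1"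
    by auto
  define t' where "t' = min \<theta> (d / 2)"
  have t': "t' > 0" "t' \<le> \<theta>" using th0 d by (auto simp: t'_def)
  have m1: "?m t' < 1" using d(2)[of t'] t' d(1) by (simp add: t'_def)
  have m0: "?m t' \<ge> 0" using assms(4) q0 by simp
  let ?P = "measure M {\<omega> \<in> space M. \<forall>t\<ge>1. (\<Sum>i=1..t. \<zeta> i \<omega>) \<le> 0}"
  define K where "K = q * (exp (- \<theta>) * exp (t' * (- a)))"
  have bound: "?P \<le> q * (1 - exp (- X)) + K * ?m t' ^ n" for n
  proof -
    have meas: "\<And>i. i \<ge> 1 \<Longrightarrow> \<zeta> i \<in> borel_measurable M"
      using assms(5) unfolding indep_vars_def by auto
    have "?P \<le> prob {\<omega>\<in>space M. (\<lambda>i. \<zeta> i \<omega>) \<in> G (Suc n) 1 0}"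
    proof (rule finite_measure_mono)
      show "{\<omega> \<in> space M. \<forall>t\<ge>1. (\<Sum>i=1..t. \<zeta> i \<omega>) \<le> 0} \<subseteq> {\<omega>\<in>space M. (\<lambda>i. \<zeta> i \<omega>) \<in> G (Suc n) 1 0}"
        by (auto simp: G_def atLeastLessThanSuc_atLeastAtMost)
      show "{\<omega>\<in>space M. (\<lambda>i. \<zeta> i \<omega>) \<in> G (Suc n) 1 0} \<in> events"
        by (rule E_sets) (use meas in auto)
    qed
    also have "\<dots> = V q a (Suc n) 0"
      using prob_G[OF assms(5) a assms(6) h2, of 1 "Suc n" 0] by simp
    also have "\<dots> = q * V q a n (- a)" using a by simp
    also have "\<dots> \<le> q * (1 - exp (\<theta> * (- a - 1)) + R q a \<theta> n (- a))"
      using V_R_bound[of q a \<theta> "- a" n] q0 assms(4) a th0 f a by (intro mult_left_mono) auto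
    also have "\<dots> \<le> q * (1 - exp (\<theta> * (- a - 1)) + exp (- \<theta>) * exp (t' * (- a)) * ?m t' ^ n)"
      using R_bound[of q a t' \<theta> "- a" n] q0 assms(4) a t' by (intro mult_left_mono add_mono) auto
    also have "\<dots> = q * (1 - exp (- X)) + K * ?m t' ^ n"
    proof -
      have "\<theta> * (- a - 1) = - X" using thX by (simp add: algebra_simps)
      then show ?thesis unfolding K_def by (simp add: algebra_simps)
    qed
    finally show ?thesis .
  qed
  have lim: "(\<lambda>n. q * (1 - exp (- X)) + K * ?m t' ^ n) \<longlonglongrightarrow> q * (1 - exp (- X)) + K * 0"
    by (intro tendsto_intros LIMSEQ_power_zero) (use m0 m1 in auto)
  have "?P \<le> q * (1 - exp (- X))"
    using LIMSEQ_le_const[OF lim] bound by auto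
  also have "\<dots> \<le> q * min X 1"
  proof (rule mult_left_mono)
    have "1 - X \<le> exp (- X)" using exp_ge_add_one_self[of "- X"] by simp
    then show "1 - exp (- X) \<le> min X 1" by simp
  qed (use q0 in simp)
  finally show ?thesis unfolding Xeq .
qed


end
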